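(* Let $K\subset GL(4,\mathbb C)$ be the group generated by $\rho_1=\begin{pmatrix}1&0&0&0\\1&1&0&0\\0&0&1&0\\0&0&1&1\end{pmatrix}$, $\rho_2=\begin{pmatrix}1&0&0&0\\0&1&0&0\\1&0&1&0\\0&1&0&1\end{pmatrix}$, $\rho_3=\begin{pmatrix}1&-2&-2&0\\0&1&0&0\\0&0&1&0\\0&0&0&1\end{pmatrix}$, and let $$\tilde{\mathsf H}_0=\begin{pmatrix}0&2i\sqrt2&2i\sqrt2&0\\-2i\sqrt2&0&0&0\\-2i\sqrt2&0&0&0\\0&0&0&0\end{pmatrix},\qquad \mathsf R_0=\frac1{\sqrt2}\begin{pmatrix}i&0&-i&0\\0&-\frac{1+i}{\sqrt2}&0&-\frac{1-i}{\sqrt2}\\0&\frac{1-i}{\sqrt2}&0&\frac{1+i}{\sqrt2}\\1&0&1&0\end{pmatrix},\qquad \mathsf G=\begin{pmatrix}0&-2&0&2\\2&0&-2&0\\0&2&0&-2\\-2&0&2&0\end{pmatrix}.$$ Then $\mathsf R_0$ is unitary (${}^t\overline{\mathsf R_0}\mathsf R_0=\mathrm{Id}_4$), $\mathsf R_0^{-1}\tilde{\mathsf H}_0\mathsf R_0=\sqrt{-1}\,\mathsf G$, and $\sqrt{-1}\,\mathsf G$ spans the (one-dimensional) real vector space of Hermitian quadratic invariants of the conjugated group $\langle \mathsf R_0^{-1}\rho_1\mathsf R_0,\ \mathsf R_0^{-1}\rho_2\mathsf R_0,\ \mathsf R_0^{-1}\rho_3\mathsf R_0\rangle$, i.e. of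 the Hermitian matrices $Q$ with ${}^t\overline g Q g=Q$ for all $g$ in that group.
   Context: The matrices $\rho_1,\rho_2,\rho_3$ are the images of the loops around $x=0$, $y=0$ and the parabola $16(x-y)^2-8(x+y)+1=0$ under the monodromy representation (w.r.t. a twisted-cycle basis, obtained from the generalised Picard–Lefschetz theorem) of the Horn system $\big(\theta_x^2-x(2\theta_x+2\theta_y+1)(2\theta_x+2\theta_y+2)\big)f=0$, $\big(\theta_y^2-y(2\theta_x+2\theta_y+1)(2\theta_x+2\theta_y+2)\big)f=0$ ($\theta_x=x\partial_x$, $\theta_y=y\partial_y$). $\mathsf G$ is the Gram matrix, with respect to the Euler form, of the derived restrictions to a generic bi-degree $(2,2)$ curve in $\mathbb P^1\times\mathbb P^1$ of the right dual exceptional collection of $(\mathcal O,\mathcal O(1,0),\mathcal O(1,1),\mathcal O(2,1))$. *)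

theory Defs
  imports "HOL-Analysis.Analysis"
begin

text \<open>4x4 complex matrices are rendered as complex^4^4 (HOL-Analysis). Row/column
  indices of type 4 are mapped to 0..3 via Rep_bit0.\<close>

definition idx4 :: "4 \<Rightarrow> nat" where
  "idx4 i = nat (Rep_bit0 i)"

definition mat4 :: "complex list list \<Rightarrow> complex^4^4" where
  "mat4 xss = (\<chi> i j. (xss ! idx4 i) ! idx4 j)"

definition ctrans :: "complex^'n^'n \<Rightarrow> complex^'n^'n" where
  "ctrans M = (\<chi> i j. cnj (M $ j $ i))"

definition smult_mat :: "complex \<Rightarrow> complex^'n^'m \<Rightarrow> complex^'n^'m" where
  "smult_mat c M = (\<chi> i j. c * M $ i $ j)"

inductive_set gen_group :: "(complex^'n^'n) set \<Rightarrow> (complex^'n^'n) set"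
  for S where
  gen_one: "mat 1 \<in> gen_group S"
| gen_mult: "g \<in> S \<Longrightarrow> h \<in> gen_group S \<Longrightarrow> g ** h \<in> gen_group S"
| gen_inv_mult: "g \<in> S \<Longrightarrow> h \<in> gen_group S \<Longrightarrow> matrix_inv g ** h \<in> gen_group S"

definition rho1 :: "complex^4^4" where
  "rho1 = mat4 [[1,0,0,0],[1,1,0,0],[0,0,1,0],[0,0,1,1]]"

definition rho2 :: "complex^4^4" where
  "rho2 = mat4 [[1,0,0,0],[0,1,0,0],[1,0,1,0],[0,1,0,1]]"

definition rho3 :: "complex^4^4" where
  "rho3 = mat4 [[1,-2,-2,0],[0,1,0,0],[0,0,1,0],[0,0,0,1]]"

definition H0 :: "complex^4^4" where
  "H0 = (let a = 2 * \<i> * complex_of_real (sqrt 2) in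
         mat4 [[0,a,a,0],[-a,0,0,0],[-a,0,0,0],[0,0,0,0]])"

definition R0 :: "complex^4^4" where
  "R0 = (let s = complex_of_real (sqrt 2) in
         smult_mat (1 / s)
          (mat4 [[\<i>, 0, -\<i>, 0],
                 [0, -((1 + \<i>) / s), 0, -((1 - \<i>) / s)],
                 [0, (1 - \<i>) / s, 0, (1 + \<i>) / s],
                 [1, 0, 1, 0]]))"

definition Gmat :: "complex^4^4" where
  "Gmat = mat4 [[0,-2,0,2],[2,0,-2,0],[0,2,0,-2],[-2,0,2,0]]"

end

theory Submission imports Defs begin

lemma idx4_vals: "idx4 1 = 1" "idx4 2 = 2" "idx4 3 = 3" "idx4 4 = 0"
  unfolding idx4_def by (simp_all add: bit0.Rep_numeral bit0.Rep_1)
lemma mat4_nth: "mat4 xss $ i $ j = xss ! idx4 i ! idx4 j"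
  by (simp add: mat4_def)
lemma mat_eq4: "(A::complex^4^4) = B \<longleftrightarrow> (\<forall>i j. A$i$j = B$i$j)"
  by (simp add: vec_eq_iff)
lemmas msimps = mat_eq4 forall_4 matrix_matrix_mult_def sum_4 mat4_nth idx4_vals ctrans_def smult_mat_def mat_def
definition "rt = complex_of_real (sqrt 2)"
lemma rt2: "rt * rt = 2" unfolding rt_def
  by (simp flip: of_real_mult)
lemma rt_nz: "rt \<noteq> 0" unfolding rt_def by simp
lemma rt2': "rt * (rt * x) = 2 * x" by (simp add: mult.assoc[symmetric] rt2)
lemma cnj_rt: "cnj rt = rt" unfolding rt_def by simp
lemma div_rt: "x / rt = x * rt / 2" using rt2 rt_nz by (simp add: field_simps)
lemma R0_alt: "R0 = mat4 [[\<i> * rt/2, 0, -\<i> * rt/2, 0],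
                 [0, -((1 + \<i>) / 2), 0, -((1 - \<i>) / 2)],
                 [0, (1 - \<i>) / 2, 0, (1 + \<i>) / 2],
                 [rt/2, 0, rt/2, 0]]"
  unfolding R0_def Let_def rt_def[symmetric] div_rt
  apply (simp add: msimps)
  apply (simp add: algebra_simps rt2 rt2')
  done
lemma H0_alt: "H0 = mat4 [[0,2 * \<i> * rt,2 * \<i> * rt,0],[-(2 * \<i> * rt),0,0,0],[-(2 * \<i> * rt),0,0,0],[0,0,0,0]]"
  unfolding H0_def Let_def rt_def by simp

lemma RR: "ctrans R0 ** R0 = mat 1"
  unfolding R0_alt
  apply (simp add: msimps cnj_rt)
  apply (simp add: algebra_simps rt2 rt2')
  done

lemma RRt: "R0 ** ctrans R0 = mat 1"
  unfolding R0_alt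
  apply (simp add: msimps cnj_rt)
  apply (simp add: algebra_simps rt2 rt2')
  done

lemma RHR: "ctrans R0 ** H0 ** R0 = smult_mat \<i> Gmat"
  unfolding R0_alt H0_alt Gmat_def
  apply (simp add: msimps cnj_rt)
  apply (simp add: algebra_simps rt2 rt2')
  apply (simp add: complex_eq_iff)
  done

definition "rho1i = (mat4 [[1,0,0,0],[-1,1,0,0],[0,0,1,0],[0,0,-1,1]] :: complex^4^4)"
definition "rho2i = (mat4 [[1,0,0,0],[0,1,0,0],[-1,0,1,0],[0,-1,0,1]] :: complex^4^4)"
definition "rho3i = (mat4 [[1,2,2,0],[0,1,0,0],[0,0,1,0],[0,0,0,1]] :: complex^4^4)"

lemma rho_invs:
  "rho1 ** rho1i = mat 1" "rho1i ** rho1 = mat 1"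
  "rho2 ** rho2i = mat 1" "rho2i ** rho2 = mat 1"
  "rho3 ** rho3i = mat 1" "rho3i ** rho3 = mat 1"
  unfolding rho1_def rho2_def rho3_def rho1i_def rho2i_def rho3i_def
  by (simp_all add: msimps)

lemma rho_H0:
  "ctrans rho1 ** H0 ** rho1 = H0" "ctrans rho1i ** H0 ** rho1i = H0"
  "ctrans rho2 ** H0 ** rho2 = H0" "ctrans rho2i ** H0 ** rho2i = H0"
  "ctrans rho3 ** H0 ** rho3 = H0" "ctrans rho3i ** H0 ** rho3i = H0"
  unfolding rho1_def rho2_def rho3_def rho1i_def rho2i_def rho3i_def H0_alt
  by (simp_all add: msimps algebra_simps)

lemma iG_herm: "ctrans (smult_mat \<i> Gmat) = smult_mat \<i> Gmat"
  unfolding Gmat_def by (simp add: msimps)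
lemma solve_inv:
  assumes h1: "ctrans rho1 ** M ** rho1 = M" and h2: "ctrans rho2 ** M ** rho2 = M"
    and h3: "ctrans rho3 ** M ** rho3 = M" and hh: "ctrans M = M"
  shows "M = smult_mat (complex_of_real (Im (M$4$1) / (2 * sqrt 2))) H0"
proof -
  have e: "A = B \<Longrightarrow> A $ i $ j = B $ i $ j" for A B :: "complex^4^4" and i j by simp
  note E1 = e[OF h1]
  note E2 = e[OF h2]
  note E3 = e[OF h3]
  note EH = e[OF hh]
  have f1: "M$1$1 = 0" using E1[of 4 1] by (simp add: msimps rho1_def algebra_simps)
  have f2: "M$1$3 = 0" using E1[of 4 3] by (simp add: msimps rho1_def algebra_simps)
  have f3: "M$3$1 = 0" using E1[of 2 1] by (simp add: msimps rho1_def algebra_simps)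
  have f4: "M$3$3 = 0" using E1[of 2 3] by (simp add: msimps rho1_def algebra_simps)
  have f7: "M$3$4 + M$2$1 = 0" using E1[of 2 4] f3 by (simp add: msimps rho1_def algebra_simps)
  have g1: "M$2$2 = 0" using E2[of 4 2] by (simp add: msimps rho2_def algebra_simps)
  have g2: "M$2$3 = 0" using E2[of 4 3] by (simp add: msimps rho2_def algebra_simps)
  have g3: "M$3$2 = 0" using E2[of 1 2] by (simp add: msimps rho2_def algebra_simps)
  have g6: "M$3$4 + M$1$2 = 0" using E2[of 1 4] g2 g3 by (simp add: msimps rho2_def algebra_simps)
  have k1: "M$4$4 = 0" using E3[of 4 1] by (simp add: msimps rho3_def algebra_simps)
  have k2: "M$3$4 = 0" using E3[of 3 1] by (simp add: msimps rho3_def algebra_simps)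
  have k3: "M$4$3 = 0" using E3[of 1 3] by (simp add: msimps rho3_def algebra_simps)
  have k4: "M$4$2 + M$1$4 = 0"
  proof -
    have "2 * M$1$4 + 2 * M$4$2 = 0" using E3[of 1 2] k1 by (simp add: msimps rho3_def algebra_simps)
    moreover have "M$4$2 + M$1$4 = (2 * M$1$4 + 2 * M$4$2) / 2" by simp
    ultimately show ?thesis by simp
  qed
  have k5: "M$4$1 + M$2$4 = 0"
  proof -
    have "2 * M$2$4 + 2 * M$4$1 = 0" using E3[of 2 1] k1 by (simp add: msimps rho3_def algebra_simps)
    moreover have "M$4$1 + M$2$4 = (2 * M$2$4 + 2 * M$4$1) / 2" by simp
    ultimately show ?thesis by simp
  qed
  have f5: "M$1$4 + M$4$1 = 0" using E1[of 4 4] f1 by (simp add: msimps rho1_def algebra_simps)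
  have hc: "cnj (M$4$1) = M$1$4" using EH[of 1 4] by (simp add: msimps algebra_simps)
  define r where "r = Im (M$4$1) / (2 * sqrt 2)"
  have re: "Re (M$4$1) = 0"
  proof -
    have "cnj (M$4$1) = - M$4$1" using hc f5 by (simp add: add_eq_0_iff)
    thus ?thesis by (simp add: complex_eq_iff)
  qed
  have a: "M$4$1 = complex_of_real r * (2 * \<i> * rt)"
    unfolding r_def rt_def using re by (simp add: complex_eq_iff)
  have z: "M$1$2 = 0" "M$2$1 = 0" using k2 g6 f7 by simp_all
  have b1: "M$1$4 = - M$4$1" using f5 by (simp add: eq_neg_iff_add_eq_0)
  have b2: "M$4$2 = M$4$1" using k4 b1 by simp
  have b3: "M$2$4 = - M$4$1" using k5 by (simp add: add_eq_0_iff)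
  note b = b1 b2 b3
  show ?thesis unfolding r_def[symmetric] H0_alt
    using f1 f2 f3 f4 g1 g2 g3 k1 k2 k3 z b a by (simp add: msimps)
qed

lemma ctrans_mult: "ctrans ((A::complex^'n^'n) ** B) = ctrans B ** ctrans A"
  by (simp add: ctrans_def matrix_matrix_mult_def vec_eq_iff mult.commute)
lemma ctrans_ctrans: "ctrans (ctrans (A::complex^'n^'n)) = A"
  by (simp add: ctrans_def vec_eq_iff)
lemma smult_left: "smult_mat c (A::complex^'n^'n) ** B = smult_mat c (A ** B)"
  by (simp add: smult_mat_def matrix_matrix_mult_def vec_eq_iff sum_distrib_left mult.assoc)
lemma smult_right: "(A::complex^'n^'n) ** smult_mat c B = smult_mat c (A ** B)"
  by (simp add: smult_mat_def matrix_matrix_mult_def vec_eq_iff sum_distrib_left mult.left_commute)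
lemma ctrans_smult: "ctrans (smult_mat c (A::complex^'n^'n)) = smult_mat (cnj c) (ctrans A)"
  by (simp add: smult_mat_def ctrans_def vec_eq_iff)

lemma ctrans_mat1: "ctrans (mat 1 :: complex^'n^'n) = mat 1"
  unfolding ctrans_def mat_def by (auto simp: vec_eq_iff)

lemma matrix_inv_eq:
  fixes A B :: "complex^'n^'n"
  assumes "A ** B = mat 1" "B ** A = mat 1"
  shows "matrix_inv A = B"
proof -
  let ?C = "matrix_inv A"
  have "A ** ?C = mat 1 \<and> ?C ** A = mat 1"
    unfolding matrix_inv_def by (rule someI[of _ B]) (use assms in auto)
  hence "?C = ?C ** (A ** B)" "?C ** A = mat 1" using assms by auto
  thus ?thesis by (metis matrix_mul_assoc matrix_mul_lid)
qed

lemma gen_group_inv: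
  fixes Q :: "complex^'n^'n"
  assumes "\<forall>s\<in>S. ctrans s ** Q ** s = Q \<and> ctrans (matrix_inv s) ** Q ** matrix_inv s = Q"
  shows "g \<in> gen_group S \<Longrightarrow> ctrans g ** Q ** g = Q"
proof (induction rule: gen_group.induct)
  case gen_one
  then show ?case by (simp add: ctrans_mat1)
next
  case (gen_mult g h)
  have "ctrans (g ** h) ** Q ** (g ** h) = ctrans h ** (ctrans g ** Q ** g) ** h"
    by (simp add: ctrans_mult matrix_mul_assoc)
  then show ?case using gen_mult assms by simp
next
  case (gen_inv_mult g h)
  have "ctrans (matrix_inv g ** h) ** Q ** (matrix_inv g ** h)
     = ctrans h ** (ctrans (matrix_inv g) ** Q ** matrix_inv g) ** h"
    by (simp add: ctrans_mult matrix_mul_assoc)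
  then show ?case using gen_inv_mult assms by simp
qed

lemmas rassoc = matrix_mul_assoc[symmetric]

lemma Rcancel: "R0 ** (ctrans R0 ** Y) = Y" "ctrans R0 ** (R0 ** Y) = Y"
  by (simp_all add: matrix_mul_assoc RR RRt)

lemma conj_gen:
  fixes X Xi :: "complex^4^4"
  assumes inv: "X ** Xi = mat 1" "Xi ** X = mat 1"
    and h: "ctrans X ** H0 ** X = H0" "ctrans Xi ** H0 ** Xi = H0"
  defines "g \<equiv> ctrans R0 ** X ** R0"
  shows "ctrans g ** smult_mat c (smult_mat \<i> Gmat) ** g = smult_mat c (smult_mat \<i> Gmat)
     \<and> ctrans (matrix_inv g) ** smult_mat c (smult_mat \<i> Gmat) ** matrix_inv g = smult_mat c (smult_mat \<i> Gmat)"
proof -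
  have h': "ctrans X ** (H0 ** (X ** Y)) = H0 ** Y" "ctrans Xi ** (H0 ** (Xi ** Y)) = H0 ** Y" for Y
    using h by (simp_all add: matrix_mul_assoc)
  have inv': "X ** (Xi ** Y) = Y" "Xi ** (X ** Y) = Y" for Y
    using inv by (simp_all add: matrix_mul_assoc)
  have mi: "matrix_inv g = ctrans R0 ** Xi ** R0"
    unfolding g_def by (rule matrix_inv_eq) (simp_all add: rassoc Rcancel inv' RR)
  have G: "smult_mat \<i> Gmat = ctrans R0 ** H0 ** R0" using RHR by simp
  show ?thesis unfolding mi unfolding g_def G
    by (simp add: ctrans_mult ctrans_ctrans smult_left smult_right rassoc Rcancel h')
qed

theorem proposition4p2:
  shows "ctrans R0 ** R0 = mat 1 \<and>
         matrix_inv R0 ** H0 ** R0 = smult_mat \<i> Gmat \<and>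
         {Q. ctrans Q = Q \<and>
             (\<forall>g \<in> gen_group {matrix_inv R0 ** rho1 ** R0,
                                 matrix_inv R0 ** rho2 ** R0,
                                 matrix_inv R0 ** rho3 ** R0}.
                ctrans g ** Q ** g = Q)}
         = (\<lambda>r::real. smult_mat (complex_of_real r) (smult_mat \<i> Gmat)) ` UNIV"
proof -
  have Rinv: "matrix_inv R0 = ctrans R0" by (rule matrix_inv_eq[OF RRt RR])
  have G: "smult_mat \<i> Gmat = ctrans R0 ** H0 ** R0" using RHR by simp
  define S where "S = {ctrans R0 ** rho1 ** R0, ctrans R0 ** rho2 ** R0, ctrans R0 ** rho3 ** R0}"
  have sub: "Q \<in> range (\<lambda>r::real. smult_mat (complex_of_real r) (smult_mat \<i> Gmat))"
    if herm: "ctrans Q = Q" and inv: "\<forall>g\<in>gen_group S. ctrans g ** Q ** g = Q" for Q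
  proof -
    define M where "M = R0 ** Q ** ctrans R0"
    have one: "ctrans X ** M ** X = M" if "X \<in> {rho1, rho2, rho3}" for X
    proof -
      have "ctrans R0 ** X ** R0 \<in> S" using that unfolding S_def by auto
      hence "ctrans R0 ** X ** R0 ** mat 1 \<in> gen_group S" by (rule gen_mult) (rule gen_one)
      hence "ctrans (ctrans R0 ** X ** R0) ** Q ** (ctrans R0 ** X ** R0) = Q" using inv by simp
      hence "R0 ** (ctrans (ctrans R0 ** X ** R0) ** Q ** (ctrans R0 ** X ** R0)) ** ctrans R0
            = R0 ** Q ** ctrans R0" by simp
      thus ?thesis unfolding M_def
        by (simp add: ctrans_mult ctrans_ctrans rassoc Rcancel RRt)
    qed
    have hM: "ctrans M = M" unfolding M_def
      by (simp add: ctrans_mult ctrans_ctrans herm rassoc)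
    define r where "r = Im (M$4$1) / (2 * sqrt 2)"
    have Meq: "M = smult_mat (complex_of_real r) H0"
      unfolding r_def by (rule solve_inv) (use one hM in auto)
    have "Q = ctrans R0 ** M ** R0" unfolding M_def by (simp add: rassoc Rcancel RR)
    also have "\<dots> = smult_mat (complex_of_real r) (smult_mat \<i> Gmat)"
      unfolding Meq G by (simp add: smult_left smult_right rassoc)
    finally show ?thesis by blast
  qed
  have sup: "ctrans Q = Q \<and> (\<forall>g\<in>gen_group S. ctrans g ** Q ** g = Q)"
    if "Q = smult_mat (complex_of_real r) (smult_mat \<i> Gmat)" for Q r
  proof
    show "ctrans Q = Q" unfolding that
      by (subst ctrans_smult) (simp add: iG_herm)
  next
    have "\<forall>s\<in>S. ctrans s ** Q ** s = Q \<and> ctrans (matrix_inv s) ** Q ** matrix_inv s = Q"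
      unfolding S_def that
      using conj_gen[OF rho_invs(1,2) rho_H0(1,2), of "complex_of_real r"]
        conj_gen[OF rho_invs(3,4) rho_H0(3,4), of "complex_of_real r"]
        conj_gen[OF rho_invs(5,6) rho_H0(5,6), of "complex_of_real r"]
      by (simp only: ball_simps simp_thms)
    thus "\<forall>g\<in>gen_group S. ctrans g ** Q ** g = Q" using gen_group_inv by blast
  qed
  have set: "{Q. ctrans Q = Q \<and> (\<forall>g\<in>gen_group S. ctrans g ** Q ** g = Q)}
      = range (\<lambda>r::real. smult_mat (complex_of_real r) (smult_mat \<i> Gmat))"
  proof (intro equalityI subsetI)
    fix Q assume "Q \<in> {Q. ctrans Q = Q \<and> (\<forall>g\<in>gen_group S. ctrans g ** Q ** g = Q)}"
    hence "ctrans Q = Q" "\<forall>g\<in>gen_group S. ctrans g ** Q ** g = Q" by auto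
    thus "Q \<in> range (\<lambda>r::real. smult_mat (complex_of_real r) (smult_mat \<i> Gmat))" by (rule sub)
  next
    fix Q assume "Q \<in> range (\<lambda>r::real. smult_mat (complex_of_real r) (smult_mat \<i> Gmat))"
    then obtain r where "Q = smult_mat (complex_of_real r) (smult_mat \<i> Gmat)" by blast
    from sup[OF this] show "Q \<in> {Q. ctrans Q = Q \<and> (\<forall>g\<in>gen_group S. ctrans g ** Q ** g = Q)}"
      by (rule CollectI)
  qed
  show ?thesis
    unfolding Rinv S_def[symmetric]
    by (simp only: RR RHR set simp_thms)
qed
end
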